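(* Let $d$ be even and let $A$ be a concave linear Nakayama algebra which is a higher Auslander algebra of global dimension $d$. Let $I$ be an indecomposable injective, non-projective $A$-module of length $m\ge2$. Then $\operatorname{pd}I=d$ and $I$ is plus-strictly-increasing; explicitly, $\operatorname{char}I=(d,c_2,\dots,c_m)$ with $c_2<c_3<\cdots<c_m<d$ odd numbers.
   Context: Conventions: $k$ a field; linear Nakayama algebras are basic $kQ/I$ with $Q$ a linearly oriented path; modules finitely generated left, indecomposables uniserial. Even/odd indecomposable: parity of $\operatorname{pd}$. For indecomposable $M$ with composition factors $F_1=\operatorname{soc}M,\dots,F_m=\operatorname{top}M$, $\operatorname{char}M=(z_1,\dots,z_m)$ with $z_i=\operatorname{pd}F_i$ if $F_i$ odd, $z_i=\operatorname{pd}M$ if $F_i$ even. Concave: Kupisch series weakly increasing then weakly decreasing. Higher Auslander algebra: global dimension = dominant dimension. An indecomposable module $Y$ is plus-strictly-increasing if $\operatorname{char}Y=(e,c_2,\dots,c_m)$ with $e$ even and $c_2<\cdots<c_m<e$ odd. *)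

theory Defs
  imports Main "HOL-Library.Extended_Nat"
begin

text \<open>
Combinatorial model of a linear Nakayama algebra A = kQ/I, Q = 0 -> 1 -> ... -> n-1,
given by its Kupisch series c = [c_0, ..., c_(n-1)], c_i = length of P_i = A e_i.
An indecomposable (uniserial) module is encoded by a pair (i, l) with 0 < l <= c_i:
top S_i, composition factors S_i (top), S_(i+1), ..., S_(i+l-1) (socle).
A pair (i, 0) encodes the zero module.  Nothing depends on the field k.
\<close>

definition kupisch :: "nat list \<Rightarrow> bool" where
  "kupisch c \<longleftrightarrow> c \<noteq> [] \<and> last c = 1 \<and>
     (\<forall>i. i + 1 < length c \<longrightarrow> 2 \<le> c ! i \<and> c ! i \<le> c ! (i + 1) + 1)"

definition concave :: "nat list \<Rightarrow> bool" where
  "concave c \<longleftrightarrow> (\<exists>p < length c.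
      (\<forall>i j. i \<le> j \<and> j \<le> p \<longrightarrow> c ! i \<le> c ! j) \<and>
      (\<forall>i j. p \<le> i \<and> i \<le> j \<and> j < length c \<longrightarrow> c ! j \<le> c ! i))"

definition indec :: "nat list \<Rightarrow> nat \<times> nat \<Rightarrow> bool" where
  "indec c M \<longleftrightarrow> fst M < length c \<and> 1 \<le> snd M \<and> snd M \<le> c ! fst M"

definition is_proj :: "nat list \<Rightarrow> nat \<times> nat \<Rightarrow> bool" where
  "is_proj c M \<longleftrightarrow> snd M = c ! fst M"

text \<open>M(i,l) is injective iff it is not a proper submodule of M(i-1,l+1).\<close>
definition is_inj :: "nat list \<Rightarrow> nat \<times> nat \<Rightarrow> bool" where
  "is_inj c M \<longleftrightarrow> fst M = 0 \<or> c ! (fst M - 1) \<le> snd M"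

text \<open>Syzygy: kernel of the projective cover P_i -> M(i,l).\<close>
definition syz :: "nat list \<Rightarrow> nat \<times> nat \<Rightarrow> nat \<times> nat" where
  "syz c M = (let (i, l) = M in
     if 0 < l \<and> l < c ! i then (i + l, c ! i - l) else (i, 0))"

definition pd :: "nat list \<Rightarrow> nat \<times> nat \<Rightarrow> enat" where
  "pd c M = (if \<exists>k. is_proj c ((syz c ^^ k) M)
             then enat (LEAST k. is_proj c ((syz c ^^ k) M)) else \<infinity>)"

definition gldim :: "nat list \<Rightarrow> enat" where
  "gldim c = Sup (pd c ` {M. indec c M})"

text \<open>Injective envelope of M(i,l): the indecomposable injective with socle S_(i+l-1).\<close>
definition env_top :: "nat list \<Rightarrow> nat \<times> nat \<Rightarrow> nat" where
  "env_top c M = (LEAST t. fst M + snd M \<le> t + c ! t)"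

definition env :: "nat list \<Rightarrow> nat \<times> nat \<Rightarrow> nat \<times> nat" where
  "env c M = (env_top c M, fst M + snd M - env_top c M)"

text \<open>Cosyzygy: cokernel of M -> injective envelope (zero module if M injective).\<close>
definition cosyz :: "nat list \<Rightarrow> nat \<times> nat \<Rightarrow> nat \<times> nat" where
  "cosyz c M = (if snd M = 0 then M else (env_top c M, fst M - env_top c M))"

text \<open>dominant dimension of a module: the first k terms of its minimal injective
  coresolution are projective.\<close>
definition domdim_ge :: "nat list \<Rightarrow> nat \<times> nat \<Rightarrow> nat \<Rightarrow> bool" where
  "domdim_ge c M k \<longleftrightarrow> (\<forall>j < k. snd ((cosyz c ^^ j) M) \<noteq> 0 \<longrightarrow>
                              is_proj c (env c ((cosyz c ^^ j) M)))"

definition domdim_mod :: "nat list \<Rightarrow> nat \<times> nat \<Rightarrow> enat" where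
  "domdim_mod c M = Sup {enat k | k. domdim_ge c M k}"

definition domdim :: "nat list \<Rightarrow> enat" where
  "domdim c = (INF i \<in> {..<length c}. domdim_mod c (i, c ! i))"

definition higher_auslander :: "nat list \<Rightarrow> nat \<Rightarrow> bool" where
  "higher_auslander c d \<longleftrightarrow> gldim c = enat d \<and> domdim c = enat d"

definition odd_e :: "enat \<Rightarrow> bool" where
  "odd_e x \<longleftrightarrow> (\<exists>n. x = enat n \<and> odd n)"

text \<open>char M = (z_1,...,z_m), F_1 = soc M = S_(i+l-1), ..., F_m = top M = S_i.\<close>
definition charM :: "nat list \<Rightarrow> nat \<times> nat \<Rightarrow> enat list" where
  "charM c M = map (\<lambda>k. let p = pd c (fst M + snd M - k, 1) in
                          if odd_e p then p else pd c M) [1..<snd M + 1]"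

definition plus_strictly_increasing :: "nat list \<Rightarrow> nat \<times> nat \<Rightarrow> bool" where
  "plus_strictly_increasing c Y \<longleftrightarrow> indec c Y \<and>
     (\<exists>e cs. charM c Y = enat e # map enat cs \<and> even e \<and>
             sorted_wrt (<) (cs @ [e]) \<and> (\<forall>x \<in> set cs. odd x))"

end

theory Submission
  imports Defs
begin

definition FF :: "nat list \<Rightarrow> nat \<Rightarrow> nat" where
  "FF c t = (if t < length c then t + c ! t else length c)"

definition GG :: "nat list \<Rightarrow> nat \<Rightarrow> nat" where
  "GG c b = (LEAST t. b \<le> t + c ! t)"

fun XX :: "nat list \<Rightarrow> nat \<Rightarrow> nat \<Rightarrow> nat \<Rightarrow> nat" where
  "XX c a b 0 = a"
| "XX c a b (Suc 0) = b"
| "XX c a b (Suc (Suc s)) = FF c (XX c a b s)"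

fun YY :: "nat list \<Rightarrow> nat \<Rightarrow> nat \<Rightarrow> nat" where
  "YY c j 0 = FF c j"
| "YY c j (Suc 0) = j"
| "YY c j (Suc (Suc s)) = GG c (YY c j s)"

lemma XX_even: "XX c a b (2*s) = (FF c ^^ s) a"
  by (induction s) (auto simp: numeral_2_eq_2)

lemma XX_odd: "XX c a b (2*s+1) = (FF c ^^ s) b"
  by (induction s) (auto simp: numeral_2_eq_2)

lemma YY_odd: "YY c j (2*s+1) = (GG c ^^ s) j"
  by (induction s) (auto simp: numeral_2_eq_2)

lemma YY_even: "YY c j (2*s) = (GG c ^^ s) (FF c j)"
  by (induction s) (auto simp: numeral_2_eq_2)

lemma XX_shift: "XX c b (FF c a) s = XX c a b (Suc s)"
proof (induction s rule: less_induct)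
  case (less s)
  show ?case
  proof (cases s)
    case 0 then show ?thesis by simp
  next
    case (Suc s') note s' = this
    show ?thesis
    proof (cases s')
      case 0 then show ?thesis using s' by simp
    next
      case (Suc s'') then show ?thesis using s' less[of s''] by simp
    qed
  qed
qed

lemma pd_unfold: "pd c M = (if is_proj c M then 0 else eSuc (pd c (syz c M)))"
proof (cases "is_proj c M")
  case True
  then have "\<exists>k. is_proj c ((syz c ^^ k) M)" by (intro exI[of _ 0]) simp
  moreover have "(LEAST k. is_proj c ((syz c ^^ k) M)) = 0"
    using True by (intro Least_eq_0) simp
  ultimately show ?thesis using True by (simp add: pd_def zero_enat_def)
next
  case False
  have eq: "(\<exists>k. is_proj c ((syz c ^^ k) M)) \<longleftrightarrow> (\<exists>k. is_proj c ((syz c ^^ k) (syz c M)))"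
  proof
    assume "\<exists>k. is_proj c ((syz c ^^ k) M)"
    then obtain k where k: "is_proj c ((syz c ^^ k) M)" by blast
    with False obtain k' where "k = Suc k'" by (cases k) auto
    with k show "\<exists>k. is_proj c ((syz c ^^ k) (syz c M))"
      by (intro exI[of _ k']) (simp add: funpow_Suc_right del: funpow.simps)
  next
    assume "\<exists>k. is_proj c ((syz c ^^ k) (syz c M))"
    then obtain k where k: "is_proj c ((syz c ^^ k) (syz c M))" by blast
    then show "\<exists>k. is_proj c ((syz c ^^ k) M)"
      by (intro exI[of _ "Suc k"]) (simp add: funpow_Suc_right del: funpow.simps)
  qed
  show ?thesis
  proof (cases "\<exists>k. is_proj c ((syz c ^^ k) M)")
    case True
    then obtain k where k: "is_proj c ((syz c ^^ k) M)" by blast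
    have "(LEAST k. is_proj c ((syz c ^^ k) M)) = Suc (LEAST k. is_proj c ((syz c ^^ Suc k) M))"
      by (rule Least_Suc[of "\<lambda>k. is_proj c ((syz c ^^ k) M)", OF k]) (use False in simp)
    moreover have "(\<lambda>k. is_proj c ((syz c ^^ Suc k) M)) = (\<lambda>k. is_proj c ((syz c ^^ k) (syz c M)))"
      by (simp add: funpow_Suc_right del: funpow.simps)
    ultimately show ?thesis using True eq False
      by (simp add: pd_def eSuc_enat)
  next
    case nt: False
    then show ?thesis using eq False by (simp add: pd_def)
  qed
qed

locale nak =
  fixes c :: "nat list"
  assumes kup: "kupisch c"
begin

abbreviation "n \<equiv> length c"
abbreviation "F \<equiv> FF c"
abbreviation "G \<equiv> GG c"

lemma n_pos: "0 < n"
  using kup by (simp add: kupisch_def)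

lemma last_one: "c ! (n - 1) = 1"
proof -
  have "c \<noteq> []" "last c = 1" using kup by (auto simp: kupisch_def)
  then show ?thesis using last_conv_nth[of c] by simp
qed

lemma c_step: "t + 1 < n \<Longrightarrow> c ! t \<le> c ! (t+1) + 1"
  using kup by (simp add: kupisch_def)

lemma c_ge2: "t + 1 < n \<Longrightarrow> 2 \<le> c ! t"
  using kup by (simp add: kupisch_def)

lemma c_pos: "t < n \<Longrightarrow> 1 \<le> c ! t"
proof -
  assume t: "t < n"
  show ?thesis
  proof (cases "t + 1 < n")
    case True then show ?thesis using c_ge2[of t] by simp
  next
    case False then have "t = n - 1" using t by simp
    then show ?thesis using last_one by simp
  qed
qed

lemma mono_lt: "a \<le> b \<Longrightarrow> b < n \<Longrightarrow> a + c ! a \<le> b + c ! b"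
proof (induction b)
  case 0 then show ?case by simp
next
  case (Suc b)
  show ?case
  proof (cases "a = Suc b")
    case True then show ?thesis by simp
  next
    case False
    then have "a \<le> b" using Suc.prems by simp
    then have "a + c ! a \<le> b + c ! b" using Suc by simp
    also have "\<dots> \<le> Suc b + c ! Suc b" using c_step[of b] Suc.prems by simp
    finally show ?thesis .
  qed
qed

lemma F_top: "F (n - 1) = n"
  using n_pos last_one by (simp add: FF_def)

lemma F_le_n: "F t \<le> n"
proof (cases "t < n")
  case True
  then have "t + c ! t \<le> (n-1) + c ! (n-1)" using mono_lt[of t "n-1"] by simp
  then show ?thesis using True last_one n_pos by (simp add: FF_def)
qed (simp add: FF_def)

lemma F_mono: "a \<le> b \<Longrightarrow> F a \<le> F b"
proof (cases "b < n")
  case True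
  assume "a \<le> b" then show ?thesis using True mono_lt by (simp add: FF_def)
next
  case False
  then show ?thesis using F_le_n[of a] by (simp add: FF_def)
qed

lemma F_gt: "t < n \<Longrightarrow> t < F t"
  using c_pos[of t] by (simp add: FF_def)

lemma F_eq: "t < n \<Longrightarrow> F t = t + c ! t"
  by (simp add: FF_def)

lemma G_spec:
  assumes "b \<le> n"
  shows "G b < n \<and> b \<le> F (G b) \<and> (\<forall>t < G b. F t < b)"
proof -
  have P: "b \<le> (n-1) + c ! (n-1)" using assms last_one n_pos by simp
  have le: "G b \<le> n - 1" unfolding GG_def by (rule Least_le[of "\<lambda>t. b \<le> t + c ! t", OF P])
  have b: "b \<le> G b + c ! G b" unfolding GG_def by (rule LeastI[of "\<lambda>t. b \<le> t + c ! t", OF P])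
  have lt: "\<forall>t < G b. \<not> b \<le> t + c ! t" unfolding GG_def using not_less_Least by blast
  have lt2: "G b < n" using le n_pos by linarith
  show ?thesis using lt2 b lt by (auto simp: FF_def)
qed

lemma G_lt_n: "b \<le> n \<Longrightarrow> G b < n" using G_spec by blast
lemma G_F_ge: "b \<le> n \<Longrightarrow> b \<le> F (G b)" using G_spec by blast

lemma G_le_iff: "b \<le> n \<Longrightarrow> t < n \<Longrightarrow> G b \<le> t \<longleftrightarrow> b \<le> F t"
proof
  assume "b \<le> n" "G b \<le> t"
  then show "b \<le> F t" using G_F_ge[of b] F_mono[of "G b" t] by simp
next
  assume "b \<le> n" "b \<le> F t"
  then show "G b \<le> t" using G_spec[of b] by (meson leD not_le_imp_less)
qed

lemma G_mono: "a \<le> b \<Longrightarrow> b \<le> n \<Longrightarrow> G a \<le> G b"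
  using G_le_iff[of a "G b"] G_lt_n[of b] G_F_ge[of b] by simp

lemma G_F_le: "t < n \<Longrightarrow> G (F t) \<le> t"
  using G_le_iff[of "F t" t] F_le_n by simp

lemma G_le_self: "b \<le> n \<Longrightarrow> G b \<le> b"
proof (cases "b < n")
  case True
  then show ?thesis using G_le_iff[of b b] F_gt[of b] by simp
next
  case False
  assume "b \<le> n" then show ?thesis using G_lt_n[of b] False by linarith
qed

lemma G_pow_le_n: "b \<le> n \<Longrightarrow> (G ^^ k) b \<le> n"
  by (induction k) (auto dest: G_lt_n intro: less_imp_le)

lemma G_pow_mono: "a \<le> b \<Longrightarrow> b \<le> n \<Longrightarrow> (G ^^ k) a \<le> (G ^^ k) b"
proof (induction k)
  case 0 then show ?case by simp
next
  case (Suc k)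
  then show ?case using G_mono G_pow_le_n by simp
qed

definition inS :: "nat \<Rightarrow> bool" where "inS t \<longleftrightarrow> G (F t) = t"
definition inE :: "nat \<Rightarrow> bool" where "inE b \<longleftrightarrow> F (G b) = b"

lemma inS_strict: "a < b \<Longrightarrow> b < n \<Longrightarrow> inS b \<Longrightarrow> F a < F b"
proof (rule ccontr)
  assume ab: "a < b" "b < n" "inS b" "\<not> F a < F b"
  then have "F b \<le> F a" by simp
  then have "G (F b) \<le> a" using G_le_iff[of "F b" a] F_le_n ab by simp
  then show False using ab by (simp add: inS_def)
qed

lemma G_strict_E: "x < y \<Longrightarrow> y \<le> n \<Longrightarrow> inE x \<Longrightarrow> inE y \<Longrightarrow> G x < G y"
proof (rule ccontr)
  assume xy: "x < y" "y \<le> n" "inE x" "inE y" "\<not> G x < G y"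
  then have "G y \<le> G x" by simp
  then have "F (G y) \<le> F (G x)" by (rule F_mono)
  then show False using xy by (simp add: inE_def)
qed

lemma inE_F: "t < n \<Longrightarrow> inE (F t)"
proof -
  assume t: "t < n"
  have "F (G (F t)) \<le> F t" using F_mono[OF G_F_le[OF t]] .
  moreover have "F t \<le> F (G (F t))" using G_F_ge F_le_n by blast
  ultimately show ?thesis by (simp add: inE_def)
qed

lemma G_inS: "b \<le> n \<Longrightarrow> inS (G b)"
proof -
  assume b: "b \<le> n"
  have "G (F (G b)) \<le> G b" using G_F_le G_lt_n[OF b] by blast
  moreover have "G b \<le> G (F (G b))" using G_mono[OF G_F_ge[OF b] F_le_n] .
  ultimately show ?thesis by (simp add: inS_def)
qed

lemma notS_lt: "t < n \<Longrightarrow> \<not> inS t \<Longrightarrow> G (F t) < t"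
  using G_F_le[of t] by (simp add: inS_def)

end


context nak
begin

lemma pd_proj: "a < n \<Longrightarrow> b = F a \<Longrightarrow> pd c (a, b - a) = 0"
  by (subst pd_unfold) (simp add: is_proj_def F_eq)

lemma pd_step:
  assumes "a < n" "a < b" "b < F a"
  shows "pd c (a, b - a) = eSuc (pd c (b, F a - b))"
proof -
  have np: "\<not> is_proj c (a, b - a)" using assms by (simp add: is_proj_def F_eq)
  have "syz c (a, b - a) = (b, F a - b)" using assms by (auto simp: syz_def F_eq)
  then show ?thesis using np by (subst pd_unfold) simp
qed

lemma XX_le_n: "a < n \<Longrightarrow> b \<le> n \<Longrightarrow> XX c a b s \<le> n"
proof (induction s rule: less_induct)
  case (less s)
  show ?case
  proof (cases s)
    case 0 then show ?thesis using less by simp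
  next
    case (Suc s') then show ?thesis using less F_le_n by (cases s') auto
  qed
qed

lemma XX_mono:
  assumes "a < b" "b \<le> F a"
  shows "XX c a b s \<le> XX c a b (Suc s) \<and> XX c a b (Suc s) \<le> F (XX c a b s)"
proof (induction s)
  case 0 then show ?case using assms by simp
next
  case (Suc s)
  then show ?case using F_mono by simp
qed

lemma pd_chain:
  assumes "a < n" "a < b" "b \<le> F a"
    and "\<forall>s<k. XX c a b (Suc s) \<noteq> XX c a b (Suc (Suc s))"
    and "XX c a b (Suc k) = XX c a b (Suc (Suc k))"
  shows "pd c (a, b - a) = enat k"
  using assms
proof (induction k arbitrary: a b)
  case 0
  then show ?case using pd_proj by (simp add: zero_enat_def)
next
  case (Suc k)
  have bF: "b < F a" using Suc.prems(3,4) by fastforce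
  have bn: "b < n" using bF F_le_n[of a] by simp
  have ab: "F a \<le> F b" using F_mono Suc.prems(2) by simp
  have "pd c (b, F a - b) = enat k"
  proof (rule Suc.IH)
    show "\<forall>s<k. XX c b (F a) (Suc s) \<noteq> XX c b (F a) (Suc (Suc s))"
      using Suc.prems(4) by (simp only: XX_shift) auto
    show "XX c b (F a) (Suc k) = XX c b (F a) (Suc (Suc k))"
      using Suc.prems(5) by (simp only: XX_shift)
  qed (use bn bF ab in auto)
  then show ?case using pd_step[OF Suc.prems(1,2) bF] by (simp add: eSuc_enat)
qed

definition stl :: "nat \<Rightarrow> nat \<Rightarrow> nat" where
  "stl a b = (LEAST k. XX c a b (Suc k) = XX c a b (Suc (Suc k)))"

lemma stall_ex:
  assumes "a < n" "a < b" "b \<le> F a"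
  shows "\<exists>k. XX c a b (Suc k) = XX c a b (Suc (Suc k))"
proof (rule ccontr)
  assume "\<not> ?thesis"
  then have lt: "\<forall>k. XX c a b (Suc k) < XX c a b (Suc (Suc k))"
    using XX_mono[OF assms(2,3)] by (metis le_neq_implies_less)
  have "\<forall>k. k + b \<le> XX c a b (Suc k)"
  proof
    fix k show "k + b \<le> XX c a b (Suc k)"
    proof (induction k)
      case 0 then show ?case by simp
    next
      case (Suc k)
      then show ?case using lt[rule_format, of k] by linarith
    qed
  qed
  then have "n + b \<le> XX c a b (Suc n)" by blast
  moreover have "XX c a b (Suc n) \<le> n" using XX_le_n assms F_le_n[of a] by (meson order.trans)
  ultimately show False using assms by simp
qed

lemma stl_props:
  assumes "a < n" "a < b" "b \<le> F a"
  shows "XX c a b (Suc (stl a b)) = XX c a b (Suc (Suc (stl a b)))"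
    "\<forall>s<stl a b. XX c a b (Suc s) < XX c a b (Suc (Suc s))"
    "pd c (a, b - a) = enat (stl a b)"
proof -
  show st: "XX c a b (Suc (stl a b)) = XX c a b (Suc (Suc (stl a b)))"
    unfolding stl_def using stall_ex[OF assms] by (rule LeastI_ex)
  have ne: "\<forall>s<stl a b. XX c a b (Suc s) \<noteq> XX c a b (Suc (Suc s))"
    unfolding stl_def using not_less_Least by blast
  then show "\<forall>s<stl a b. XX c a b (Suc s) < XX c a b (Suc (Suc s))"
    using XX_mono[OF assms(2,3)] by (metis le_neq_implies_less)
  show "pd c (a, b - a) = enat (stl a b)"
    by (rule pd_chain[OF assms ne st])
qed

lemma indec_ab: "a < n \<Longrightarrow> a < b \<Longrightarrow> b \<le> F a \<Longrightarrow> indec c (a, b - a)"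
proof -
  assume h: "a < n" "a < b" "b \<le> F a"
  then have "b \<le> a + c ! a" by (simp add: F_eq)
  then have "1 \<le> b - a" "b - a \<le> c ! a" using h by linarith+
  then show ?thesis using h unfolding indec_def by simp
qed

lemma YY_le_n: "j < n \<Longrightarrow> YY c j s \<le> n"
proof (induction s rule: less_induct)
  case (less s)
  show ?case
  proof (cases s)
    case 0 then show ?thesis using F_le_n by simp
  next
    case (Suc s') then show ?thesis using less G_lt_n
      by (cases s') (auto intro: less_imp_le)
  qed
qed

lemma cosyz_rep:
  assumes "j < n" "\<forall>s'<s. YY c j (Suc s') < YY c j s'"
  shows "(cosyz c ^^ s) (j, c ! j) = (YY c j (Suc s), YY c j s - YY c j (Suc s))"
  using assms
proof (induction s)
  case 0 then show ?case by (simp add: F_eq)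
next
  case (Suc s)
  have IH: "(cosyz c ^^ s) (j, c ! j) = (YY c j (Suc s), YY c j s - YY c j (Suc s))"
    using Suc by auto
  have lt: "YY c j (Suc s) < YY c j s" using Suc.prems by auto
  have et: "env_top c (YY c j (Suc s), YY c j s - YY c j (Suc s)) = G (YY c j s)"
    using lt by (simp add: env_top_def GG_def)
  have "(cosyz c ^^ Suc s) (j, c ! j) = cosyz c ((cosyz c ^^ s) (j, c ! j))" by simp
  also have "\<dots> = cosyz c (YY c j (Suc s), YY c j s - YY c j (Suc s))" using IH by simp
  also have "\<dots> = (YY c j (Suc (Suc s)), YY c j (Suc s) - YY c j (Suc (Suc s)))"
    using lt et by (simp add: cosyz_def)
  finally show ?case .
qed

lemma env_proj: "a \<le> b \<Longrightarrow> b \<le> n \<Longrightarrow> is_proj c (env c (a, b - a)) \<longleftrightarrow> inE b"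
proof -
  assume ab: "a \<le> b" "b \<le> n"
  have et: "env_top c (a, b - a) = G b" using ab by (simp add: env_top_def GG_def)
  have "G b \<le> b" "G b < n" using G_le_self G_lt_n ab by auto
  then show ?thesis using et ab by (auto simp: env_def is_proj_def inE_def F_eq)
qed

end

locale nakd = nak +
  fixes d :: nat
  assumes dd: "\<And>j. j < length c \<Longrightarrow> domdim_ge c (j, c ! j) d"
begin

abbreviation "Y \<equiv> YY c"

lemma Dstep:
  assumes "j < n" "s < d" "\<forall>s'\<le>s. Y j (Suc s') < Y j s'"
  shows "inE (Y j s)"
proof -
  have rep: "(cosyz c ^^ s) (j, c ! j) = (Y j (Suc s), Y j s - Y j (Suc s))"
    using cosyz_rep[of j s] assms by auto
  have "Y j (Suc s) < Y j s" using assms(3) by simp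
  then have nz: "snd ((cosyz c ^^ s) (j, c ! j)) \<noteq> 0" using rep by simp
  have "is_proj c (env c ((cosyz c ^^ s) (j, c ! j)))"
    using dd[OF assms(1)] assms(2) nz unfolding domdim_ge_def by blast
  then show ?thesis using rep env_proj[of "Y j (Suc s)" "Y j s"] assms YY_le_n by auto
qed

lemma dualA_strict:
  assumes j: "j < n" "\<not> inS j"
  shows "s \<le> d \<Longrightarrow> \<forall>s'\<le>s. Y j (Suc s') < Y j s'"
proof (induction s)
  case 0 then show ?case using F_gt j by simp
next
  case (Suc s)
  then have IH: "\<forall>s'\<le>s. Y j (Suc s') < Y j s'" by simp
  have "Y j (Suc (Suc s)) < Y j (Suc s)"
  proof (cases s)
    case 0 then show ?thesis using notS_lt j by simp
  next
    case (Suc s1)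
    have e1: "inE (Y j s)" using Dstep[OF j(1), of s] IH Suc.prems by simp
    have e2: "inE (Y j s1)"
    proof (cases s1)
      case 0 then show ?thesis using inE_F j by simp
    next
      case (Suc s2) then show ?thesis using Dstep[OF j(1), of s1] IH \<open>s = Suc s1\<close> Suc.prems by simp
    qed
    have "Y j s < Y j s1" using IH Suc by auto
    then have "G (Y j s) < G (Y j s1)" using G_strict_E e1 e2 YY_le_n j by blast
    then show ?thesis using Suc by simp
  qed
  then show ?case using IH le_Suc_eq by auto
qed

lemma dualA_E:
  assumes "j < n" "\<not> inS j" "s < d"
  shows "inE (Y j s)"
  using Dstep[OF assms(1,3)] dualA_strict[OF assms(1,2), of s] assms(3) by simp

lemma dualA_lt:
  assumes "j < n" "\<not> inS j" "s \<le> d"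
  shows "Y j (Suc s) < Y j s"
  using dualA_strict[OF assms(1,2,3)] by simp

end


locale ha = nakd +
  assumes gl: "\<And>M. indec c M \<Longrightarrow> pd c M \<le> enat d"
    and ev: "even d"
begin

abbreviation "q \<equiv> d div 2"

lemma stl_le: "a < n \<Longrightarrow> a < b \<Longrightarrow> b \<le> F a \<Longrightarrow> stl a b \<le> d"
  using gl[OF indec_ab] stl_props(3) by fastforce

lemma G_pow_Suc: "(G ^^ Suc j) x = (G ^^ j) (G x)"
  by (simp add: funpow_Suc_right del: funpow.simps)

lemma lemP:
  assumes BC: "B < C" "C < n" "F B = F C"
    and gB: "\<forall>j<q. inE ((G ^^ j) B)"
  shows False
proof -
  have Bn: "B < n" using BC by simp
  have nC: "\<not> inS C" using G_F_le[OF Bn] BC by (simp add: inS_def)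
  define a where "a j = (G ^^ j) B" for j
  define b where "b j = (G ^^ j) C" for j
  have Yo: "Y C (2*j+1) = b j" for j using YY_odd[of c C j] by (simp add: b_def)
  have Ye: "Y C (2*(j+1)) = (G ^^ j) (G (F C))" for j
    using YY_even[of c C "j+1"] G_pow_Suc[of j "F C"] by simp
  have bE: "inE (b j)" if "j < q" for j
    using dualA_E[OF BC(2) nC, of "2*j+1"] that ev Yo by (auto elim!: evenE)
  have aE: "inE (a j)" if "j < q" for j using gB that a_def by simp
  have ba: "b (j+1) < a j" if "j < q" for j
  proof -
    have "Y C (Suc (2*(j+1))) < Y C (2*(j+1))"
      using dualA_lt[OF BC(2) nC, of "2*(j+1)"] that ev by (auto elim!: evenE)
    moreover have "Y C (Suc (2*(j+1))) = b (j+1)" using Yo[of "j+1"] by simp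
    moreover have "(G ^^ j) (G (F C)) \<le> a j"
      unfolding a_def using G_pow_mono[of "G (F C)" B j] G_F_le[OF Bn] BC(3) Bn by simp
    ultimately show ?thesis using Ye by simp
  qed
  have main: "j \<le> q \<Longrightarrow> a j < b j \<and> a j < n \<and> b j \<le> F (a j) \<and> pd c (a j, b j - a j) = enat (2*j+1)" for j
  proof (induction j)
    case 0
    have CF: "C < F B" using F_gt[OF BC(2)] BC(3) by simp
    have "pd c (B, C - B) = eSuc (pd c (C, F B - C))" by (rule pd_step[OF Bn BC(1) CF])
    also have "pd c (C, F B - C) = 0" using pd_proj[OF BC(2)] BC(3) by simp
    finally show ?case using BC CF a_def b_def by (simp add: eSuc_enat zero_enat_def one_enat_def)
  next
    case (Suc j)
    then have jq: "j < q" by simp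
    have IH: "a j < b j" "a j < n" "b j \<le> F (a j)" "pd c (a j, b j - a j) = enat (2*j+1)"
      using Suc by auto
    have bjn: "b j \<le> n" using IH F_le_n order.trans by blast
    have lt: "a (Suc j) < b (Suc j)"
      using G_strict_E[OF IH(1) bjn aE[OF jq] bE[OF jq]] by (simp add: a_def b_def)
    have an: "a (Suc j) < n" using G_lt_n[of "a j"] IH(2) by (simp add: a_def)
    have Fa: "F (a (Suc j)) = a j" using aE[OF jq] by (simp add: a_def inE_def)
    have Fb: "F (b (Suc j)) = b j" using bE[OF jq] by (simp add: b_def inE_def)
    have ba': "b (Suc j) < a j" using ba[OF jq] by simp
    have bn: "b (Suc j) < n" using ba' IH(2) by simp
    have "pd c (a (Suc j), b (Suc j) - a (Suc j)) = eSuc (pd c (b (Suc j), a j - b (Suc j)))"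
      using pd_step[OF an lt] ba' Fa by simp
    also have "pd c (b (Suc j), a j - b (Suc j)) = eSuc (pd c (a j, b j - a j))"
      using pd_step[OF bn ba'] IH(1) Fb by simp
    finally show ?case using IH lt an ba' Fa by (simp add: eSuc_enat)
  qed
  have m: "a q < b q" "a q < n" "b q \<le> F (a q)" "pd c (a q, b q - a q) = enat (2*q+1)"
    using main[of q] by auto
  have "pd c (a q, b q - a q) \<le> enat d" using gl[OF indec_ab[OF m(2) m(1) m(3)]] .
  then show False using m(4) ev by (auto elim!: evenE)
qed

lemma E1:
  assumes "b < n" "\<not> inS b" "j < q"
  shows "inE ((G ^^ j) (F b))"
  using dualA_E[OF assms(1,2), of "2*j"] assms(3) ev YY_even by (auto elim!: evenE)

lemma E0:
  assumes "b < n" "\<not> inS b" "j < q"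
  shows "inE ((G ^^ j) b)"
  using dualA_E[OF assms(1,2), of "2*j+1"] assms(3) ev YY_odd by (auto elim!: evenE)

lemma E_orbit:
  assumes "b < n" "\<not> inS b"
  shows "(F ^^ k) b < n \<Longrightarrow> \<forall>j<q. inE ((G ^^ j) ((F ^^ k) b))"
proof (induction k)
  case 0 then show ?case using E0[OF assms] by simp
next
  case (Suc k)
  define B1 where "B1 = (F ^^ k) b"
  have FB1: "F B1 < n" using Suc.prems B1_def by simp
  have B1n: "B1 < n" using FB1 by (cases "B1 < n") (auto simp: FF_def)
  show ?case
  proof (cases "inS B1")
    case False
    then show ?thesis using E1[OF B1n False] B1_def by simp
  next
    case True
    have IH: "\<forall>j<q. inE ((G ^^ j) B1)" using Suc.IH B1n B1_def by simp
    show ?thesis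
    proof (intro allI impI)
      fix j assume j: "j < q"
      show "inE ((G ^^ j) ((F ^^ Suc k) b))"
      proof (cases j)
        case 0 then show ?thesis using inE_F[OF B1n] B1_def by simp
      next
        case (Suc j')
        have "(G ^^ j) ((F ^^ Suc k) b) = (G ^^ j') (G (F B1))"
          using Suc B1_def by (simp only: G_pow_Suc) simp
        also have "\<dots> = (G ^^ j') B1" using True by (simp add: inS_def)
        finally show ?thesis using IH j Suc by simp
      qed
    qed
  qed
qed

end


context nak
begin

lemma XX_mono_le:
  assumes "a < b" "b \<le> F a" "s' \<le> s"
  shows "XX c a b s' \<le> XX c a b s"
  using assms(3)
proof (induction s)
  case 0 then show ?case by simp
next
  case (Suc s)
  then show ?case using XX_mono[OF assms(1,2), of s] le_Suc_eq by fastforce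
qed

lemma Fpow_mono: "x \<le> y \<Longrightarrow> (F ^^ s) x \<le> (F ^^ s) y"
  by (induction s) (auto intro: F_mono)

lemma Fpow_le_n: "x \<le> n \<Longrightarrow> (F ^^ s) x \<le> n"
  by (cases s) (auto simp: F_le_n)

end

locale injm = ha +
  fixes i m :: nat
  assumes ind: "indec c (i, m)" and inj: "is_inj c (i, m)" and np: "\<not> is_proj c (i, m)"
    and m2: "2 \<le> m"
begin

abbreviation "e \<equiv> i + m"
abbreviation "X \<equiv> XX c i e"

lemma i_n: "i < n" using ind by (simp add: indec_def)
lemma e_lt: "e < F i"
  using ind np by (simp add: indec_def is_proj_def F_eq[OF i_n])
lemma e_n: "e \<le> n" using e_lt F_le_n[of i] by simp
lemma ie: "i < e" using m2 by simp
lemma eF: "e \<le> F i" using e_lt by simp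

lemma Ge: "G e = i"
proof -
  have "G e \<le> i" using G_le_iff[OF e_n i_n] eF by simp
  moreover have "\<not> G e \<le> i - 1" if "i > 0"
  proof -
    have "F (i - 1) < e" using inj that i_n by (simp add: is_inj_def F_eq)
    then show ?thesis using G_le_iff[OF e_n, of "i-1"] i_n by simp
  qed
  ultimately show ?thesis by (cases "i = 0") auto
qed

lemma notE_e: "\<not> inE e" using Ge e_lt by (simp add: inE_def)

lemma pdI: "pd c (i, m) = enat (stl i e)"
  using stl_props(3)[OF i_n ie eF] by simp

lemma Xmono: "s' \<le> s \<Longrightarrow> X s' \<le> X s" using XX_mono_le[OF ie eF] .

lemma XS: "s < d \<Longrightarrow> X s < n \<Longrightarrow> inS (X s)"
proof (induction s rule: less_induct)
  case (less s)
  show ?case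
  proof (cases s)
    case 0 then show ?thesis using G_inS[OF e_n] Ge by simp
  next
    case (Suc s0)
    note s0 = Suc
    show ?thesis
    proof (rule ccontr)
      assume nS: "\<not> inS (X s)"
      define j where "j = X s"
      have jn: "j < n" using less.prems j_def by simp
      have Sb: "inS (X s')" if "s' < s" for s'
        using less.IH[OF that] that less.prems Xmono[of s' s] by simp
      have Xn: "X s' \<le> n" if "s' \<le> s" for s' using Xmono[OF that] jn j_def by simp
      have c1: "2*r \<le> s \<Longrightarrow> Y j (2*r+1) = X (s - 2*r)" for r
      proof (induction r)
        case 0 then show ?case using j_def by simp
      next
        case (Suc r)
        have eq: "s - 2*r = Suc (Suc (s - 2*r - 2))" using Suc.prems by simp
        have XF: "X (s - 2*r) = F (X (s - 2*r - 2))" using eq by (metis XX.simps(3))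
        have "Y j (2*Suc r+1) = G (Y j (2*r+1))" by (simp add: numeral_2_eq_2)
        also have "\<dots> = G (X (s - 2*r))" using Suc by simp
        also have "\<dots> = G (F (X (s - 2*r - 2)))" using XF by simp
        also have "\<dots> = X (s - 2*r - 2)"
          using Sb[of "s - 2*r - 2"] Suc.prems by (simp add: inS_def)
        finally show ?case by (simp add: numeral_2_eq_2)
      qed
      have c2: "1 \<le> r \<Longrightarrow> 2*r \<le> s+1 \<Longrightarrow> X (s+1-2*r) \<le> Y j (2*r)" for r
      proof (induction r)
        case 0 then show ?case by simp
      next
        case (Suc r)
        show ?case
        proof (cases r)
          case 0
          have "X (s - 1) \<le> X s" using Xmono by simp
          then have "F (X (s-1)) \<le> F j" using F_mono j_def by simp
          then have "G (F (X (s-1))) \<le> G (F j)" using G_mono F_le_n by simp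
          moreover have "G (F (X (s-1))) = X (s-1)" using Sb[of "s-1"] s0 by (simp add: inS_def)
          ultimately show ?thesis using 0 by (simp add: numeral_2_eq_2)
        next
          case (Suc r0)
          have IH: "X (s+1-2*r) \<le> Y j (2*r)" using Suc.IH Suc.prems \<open>r = Suc r0\<close> by simp
          have yn: "Y j (2*r) \<le> n" using YY_le_n jn by simp
          have GM: "G (X (s+1-2*r)) \<le> G (Y j (2*r))" using G_mono[OF IH yn] .
          have "s+1-2*r = Suc (Suc (s+1-2*Suc r))" using Suc.prems by simp
          then have "X (s+1-2*r) = F (X (s+1-2*Suc r))" by (metis XX.simps(3))
          moreover
          moreover have "G (F (X (s+1-2*Suc r))) = X (s+1-2*Suc r)"
            using Sb[of "s+1-2*Suc r"] Suc.prems by (simp add: inS_def)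
          moreover have "Y j (2*Suc r) = G (Y j (2*r))" by (simp add: numeral_2_eq_2)
          ultimately show ?thesis using GM by simp
        qed
      qed
      show False
      proof (cases "even s")
        case False
        then obtain p where p: "s = 2*p+1" by (metis oddE)
        have "Y j s = X 1" using c1[of p] p by simp
        moreover have "inE (Y j s)" using dualA_E[OF jn nS[folded j_def]] less.prems by simp
        ultimately show False using notE_e by simp
      next
        case True
        then obtain p where p: "s = 2*p" by (metis evenE)
        have p1: "p \<ge> 1" using p s0 by simp
        have ys: "e \<le> Y j s" using c2[of p] p p1 by simp
        have a1: "s - 1 = 2*(p-1)+1" "s - 2*(p-1) = 2" using p p1 by auto
        have "Y j (2*(p-1)+1) = X (s - 2*(p-1))" using c1[of "p-1"] p p1 by simp
        then have ys1: "Y j (s-1) = F i" using a1 by (simp add: numeral_2_eq_2)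
        have "Y j (Suc (s-1)) < Y j (s-1)"
          using dualA_lt[OF jn nS[folded j_def], of "s-1"] less.prems by simp
        then have lt: "Y j s < F i" using ys1 s0 by simp
        have E: "inE (Y j s)" using dualA_E[OF jn nS[folded j_def]] less.prems by simp
        have yn: "Y j s \<le> n" using YY_le_n jn by simp
        have "i \<le> G (Y j s)" using G_mono[OF ys yn] Ge by simp
        then have "F i \<le> F (G (Y j s))" by (rule F_mono)
        then show False using E lt by (simp add: inE_def)
      qed
    qed
  qed
qed

end


context injm
begin

abbreviation "FP s x \<equiv> (F ^^ s) x"

lemma stl_pos: "stl i e \<noteq> 0"
proof
  assume "stl i e = 0"
  then have "X 1 = X 2" using stl_props(1)[OF i_n ie eF] by (simp add: numeral_2_eq_2)
  then show False using e_lt by (simp add: numeral_2_eq_2)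
qed

lemma stl_I: "stl i e = d"
proof (rule ccontr)
  define k where "k = stl i e"
  assume "stl i e \<noteq> d"
  moreover have "k \<le> d" using stl_le[OF i_n ie eF] k_def by simp
  ultimately have kd: "k < d" using k_def by simp
  have k1: "k \<ge> 1" using stl_pos k_def by simp
  have st: "X (Suc k) = X (Suc (Suc k))" using stl_props(1)[OF i_n ie eF] k_def by simp
  have lt: "\<forall>s<k. X (Suc s) < X (Suc (Suc s))" using stl_props(2)[OF i_n ie eF] k_def by simp
  have a: "X k < X (Suc k)" using lt[rule_format, of "k-1"] k1 by simp
  have b: "X (Suc k) \<le> n" using XX_le_n[OF i_n e_n] .
  have S: "inS (X k)" using XS[OF kd] a b by simp
  have c: "X (k-1) < X k"
  proof (cases "k = 1")
    case True then show ?thesis using ie by simp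
  next
    case False
    then have k2: "k - 2 < k" "Suc (k-2) = k - 1" "Suc (Suc (k-2)) = k" using k1 by auto
    show ?thesis using lt[rule_format, OF k2(1)] k2(2,3) by simp
  qed
  have "F (X (k-1)) < F (X k)" using inS_strict[OF c _ S] a b by simp
  moreover have "X (Suc k) = F (X (k-1))"
  proof -
    have "Suc k = Suc (Suc (k-1))" using k1 by simp
    then show ?thesis by (simp only: XX.simps)
  qed
  ultimately show False using st by simp
qed

lemma pdI_d: "pd c (i, m) = enat d" using pdI stl_I by simp

lemma d_ge: "2 \<le> d" using stl_I stl_pos ev by (auto elim!: evenE)

lemma X_strict: "s \<le> d \<Longrightarrow> X s < X (Suc s)"
proof (cases s)
  case 0 then show ?thesis using ie by simp
next
  case (Suc s')
  assume "s \<le> d"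
  then show ?thesis using stl_props(2)[OF i_n ie eF] stl_I Suc by simp
qed

lemma X_n: "s \<le> d \<Longrightarrow> X s < n"
  using X_strict[of s] XX_le_n[OF i_n e_n, of "Suc s"] by simp

lemma X_S: "s < d \<Longrightarrow> inS (X s)" using XS X_n by simp

lemma X_stall: "X (Suc d) = X (Suc (Suc d))"
  using stl_props(1)[OF i_n ie eF] stl_I by simp

lemma d2q: "d = 2 * q" using ev by simp

lemma socle: "s \<le> q \<Longrightarrow> FP s (e - 1) < FP s e"
proof (induction s)
  case 0 then show ?case using ie by simp
next
  case (Suc s)
  have "FP s e = X (2*s+1)" using XX_odd[of c i e s] by simp
  moreover have "2*s+1 < d" using Suc.prems d2q by simp
  ultimately have S: "inS (FP s e)" and N: "FP s e < n" using X_S X_n by auto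
  have "F (FP s (e-1)) < F (FP s e)" using inS_strict[OF _ N S] Suc by simp
  then show ?case by simp
qed

lemma FPe_n: "FP s e \<le> n" using Fpow_le_n e_n by blast

lemma Z_facts:
  assumes "i \<le> t" "t < e"
  shows "t < n" "t < Suc t" "Suc t \<le> F t" "pd c (t, 1) = enat (stl t (Suc t))"
proof -
  show tn: "t < n" using assms e_n by simp
  show "t < Suc t" by simp
  show "Suc t \<le> F t" using F_gt[OF tn] by simp
  then show "pd c (t, 1) = enat (stl t (Suc t))" using stl_props(3)[OF tn, of "Suc t"] by simp
qed

lemma no_even_stall:
  assumes "i \<le> t" "t < e" "2*s+1 \<le> d"
  shows "XX c t (Suc t) (Suc (2*s)) \<noteq> XX c t (Suc t) (Suc (Suc (2*s)))"
proof -
  have "XX c t (Suc t) (Suc (2*s)) = FP s (Suc t)" using XX_odd[of c t "Suc t" s] by simp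
  also have "\<dots> \<le> FP s e" using Fpow_mono assms by simp
  also have "FP s e = X (2*s+1)" using XX_odd[of c i e s] by simp
  also have "\<dots> < X (Suc (2*s+1))" by (rule X_strict) (use assms in simp)
  also have "X (Suc (2*s+1)) = FP (Suc s) i" using XX_even[of c i e "Suc s"] by simp
  also have "\<dots> \<le> FP (Suc s) t" by (rule Fpow_mono) (use assms in simp)
  also have "\<dots> = XX c t (Suc t) (Suc (Suc (2*s)))" using XX_even[of c t "Suc t" "Suc s"] by simp
  finally show ?thesis by simp
qed

lemma no_even_stall_d:
  assumes "i \<le> t" "t + 2 \<le> e"
  shows "XX c t (Suc t) (Suc d) \<noteq> XX c t (Suc t) (Suc (Suc d))"
proof -
  have "XX c t (Suc t) (Suc d) = FP q (Suc t)" using XX_odd[of c t "Suc t" q] d2q by simp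
  also have "\<dots> \<le> FP q (e - 1)" using Fpow_mono assms by simp
  also have "\<dots> < FP q e" using socle by simp
  also have "FP q e = X (Suc d)" using XX_odd[of c i e q] d2q by simp
  also have "\<dots> = X (Suc (Suc d))" using X_stall .
  also have "\<dots> = FP (Suc q) i" using XX_even[of c i e "Suc q"] d2q by simp
  also have "\<dots> \<le> FP (Suc q) t" by (rule Fpow_mono) (use assms in simp)
  also have "\<dots> = XX c t (Suc t) (Suc (Suc d))" using XX_even[of c t "Suc t" "Suc q"] d2q by simp
  finally show ?thesis by simp
qed

lemma simple_odd:
  assumes "i \<le> t" "t + 2 \<le> e"
  shows "odd (stl t (Suc t))" "stl t (Suc t) < d"
proof -
  have te: "t < e" using assms by simp
  note Z = Z_facts[OF assms(1) te]
  define k where "k = stl t (Suc t)"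
  have kd: "k \<le> d" using stl_le[OF Z(1-3)] k_def by simp
  have st: "XX c t (Suc t) (Suc k) = XX c t (Suc t) (Suc (Suc k))"
    using stl_props(1)[OF Z(1-3)] k_def by simp
  show ok: "odd (stl t (Suc t))"
  proof (rule ccontr)
    assume "\<not> odd (stl t (Suc t))"
    then obtain s where s: "k = 2*s" using k_def by (auto elim!: evenE)
    show False
    proof (cases "2*s+1 \<le> d")
      case True then show False using no_even_stall[OF assms(1) te True] st s by simp
    next
      case False then have "k = d" using s kd by simp
      then show False using no_even_stall_d[OF assms] st by simp
    qed
  qed
  show "stl t (Suc t) < d" using ok kd ev k_def by (metis le_neq_implies_less)
qed

lemma socle_even: "even (stl (e-1) e)"
proof (rule ccontr)
  have i1: "i \<le> e - 1" "e - 1 < e" using ie by auto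
  have se: "Suc (e-1) = e" using ie by simp
  note Z = Z_facts[OF i1]
  define k where "k = stl (e-1) e"
  assume "\<not> even (stl (e-1) e)"
  then obtain s where s: "k = 2*s+1" using k_def by (auto elim!: oddE)
  have kd: "k \<le> d" using stl_le[OF Z(1-3)] k_def se by simp
  then have sq: "Suc s \<le> q" using s ev by (auto elim!: evenE)
  have "XX c (e-1) e (Suc k) = XX c (e-1) e (Suc (Suc k))"
    using stl_props(1)[OF Z(1-3)] k_def se by simp
  then have "FP (Suc s) (e-1) = FP (Suc s) e"
    using XX_even[of c "e-1" e "Suc s"] XX_odd[of c "e-1" e "Suc s"] s by simp
  then show False using socle[OF sq] by simp
qed

lemma simple_mu:
  assumes "i \<le> t" "t + 2 \<le> e"
  shows "\<exists>\<mu>. stl t (Suc t) = 2*\<mu> - 1 \<and> 1 \<le> \<mu> \<and> \<mu> \<le> q \<and> FP \<mu> t = FP \<mu> (Suc t) \<and>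
           (\<forall>s'<\<mu>. FP s' t < FP s' (Suc t))"
proof -
  have te: "t < e" using assms by simp
  note Z = Z_facts[OF assms(1) te]
  define k where "k = stl t (Suc t)"
  obtain s0 where "k = 2*s0 + 1" using simple_odd(1)[OF assms] k_def by (auto elim!: oddE)
  then have mu: "k = 2*(Suc s0) - 1" "1 \<le> Suc s0" by auto
  define \<mu> where "\<mu> = Suc s0"
  note mu = mu[folded \<mu>_def]
  have "k < d" using simple_odd(2)[OF assms] k_def by simp
  then have mq: "\<mu> \<le> q" using mu d2q by simp
  have "XX c t (Suc t) (Suc k) = XX c t (Suc t) (Suc (Suc k))"
    using stl_props(1)[OF Z(1-3)] k_def by simp
  then have st: "FP \<mu> t = FP \<mu> (Suc t)"
    using XX_even[of c t "Suc t" \<mu>] XX_odd[of c t "Suc t" \<mu>] mu by simp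
  have lt: "FP s' t < FP s' (Suc t)" if "s' < \<mu>" for s'
  proof (cases s')
    case 0 then show ?thesis by simp
  next
    case (Suc s'')
    have lt2: "2*s''+1 < k" using mu that Suc by simp
    have h: "XX c t (Suc t) (Suc (2*s''+1)) < XX c t (Suc t) (Suc (Suc (2*s''+1)))"
      using stl_props(2)[OF Z(1-3)] k_def lt2 by blast
    have e1: "Suc (2*s''+1) = 2*s'" and e2: "Suc (Suc (2*s''+1)) = Suc (2*s')" using Suc by simp_all
    from h[unfolded e1 e2] have "XX c t (Suc t) (2*s') < XX c t (Suc t) (Suc (2*s'))" .
    moreover have "XX c t (Suc t) (Suc (2*s')) = FP s' (Suc t)" using XX_odd[of c t "Suc t" s'] by simp
    moreover have "XX c t (Suc t) (2*s') = FP s' t" by (rule XX_even)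
    ultimately show ?thesis by simp
  qed
  show ?thesis by (rule exI[of _ \<mu>]) (use mu mq st lt k_def in auto)
qed

lemma strict_step:
  assumes "i \<le> t" "t + 3 \<le> e"
  shows "stl (Suc t) (Suc (Suc t)) < stl t (Suc t)"
proof (rule ccontr)
  assume nlt: "\<not> ?thesis"
  obtain r where r: "stl t (Suc t) = 2*r - 1" "1 \<le> r" "r \<le> q" "FP r t = FP r (Suc t)"
    "\<forall>s'<r. FP s' t < FP s' (Suc t)" using simple_mu[of t] assms by auto
  obtain r' where r': "stl (Suc t) (Suc (Suc t)) = 2*r' - 1" "1 \<le> r'" "r' \<le> q"
    "FP r' (Suc t) = FP r' (Suc (Suc t))"
    "\<forall>s'<r'. FP s' (Suc t) < FP s' (Suc (Suc t))" using simple_mu[of "Suc t"] assms by auto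
  have rr: "r \<le> r'" using nlt r(1,2) r'(1,2) by simp
  define a where "a = FP (r-1) t"
  define b where "b = FP (r-1) (Suc t)"
  have ab: "a < b" using r(5) r(2) a_def b_def by simp
  have Fab: "F a = F b"
  proof -
    have "r = Suc (r-1)" using r(2) by simp
    then have "FP r t = F a" "FP r (Suc t) = F b" unfolding a_def b_def
      by (metis comp_apply funpow.simps(2))+
    then show ?thesis using r(4) by simp
  qed
  have bn: "b < n"
  proof -
    have "b \<le> FP (r-1) (e-1)" using Fpow_mono assms b_def by simp
    also have "\<dots> < FP (r-1) e" using socle r by simp
    also have "\<dots> \<le> n" using FPe_n .
    finally show ?thesis .
  qed
  have nb: "\<not> inS b" using inS_strict[OF ab bn] Fab by auto
  define B where "B = FP (r'-1) (Suc t)"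
  define C where "C = FP (r'-1) (Suc (Suc t))"
  have BC: "B < C" using r'(5) r'(2) B_def C_def by simp
  have FBC: "F B = F C"
  proof -
    have "r' = Suc (r'-1)" using r'(2) by simp
    then have "FP r' (Suc t) = F B" "FP r' (Suc (Suc t)) = F C" unfolding B_def C_def
      by (metis comp_apply funpow.simps(2))+
    then show ?thesis using r'(4) by simp
  qed
  have Cn: "C < n"
  proof -
    have "C \<le> FP (r'-1) (e-1)" using Fpow_mono assms C_def by simp
    also have "\<dots> < FP (r'-1) e" using socle r' by simp
    also have "\<dots> \<le> n" using FPe_n .
    finally show ?thesis .
  qed
  have Bb: "B = FP (r'-r) b"
  proof -
    have "FP (r'-r) b = FP (r'-r + (r-1)) (Suc t)" using b_def by (simp add: funpow_add)
    also have "r'-r + (r-1) = r'-1" using rr r(2) by simp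
    finally show ?thesis using B_def by simp
  qed
  have "\<forall>j<q. inE ((G ^^ j) B)" using E_orbit[OF bn nb, of "r'-r"] Bb BC Cn by simp
  then show False using lemP[OF BC Cn FBC] by simp
qed

lemma strict_all:
  assumes "i \<le> t'" "t' < t" "t + 2 \<le> e"
  shows "stl t (Suc t) < stl t' (Suc t')"
  using assms
proof (induction t arbitrary: t')
  case 0 then show ?case by simp
next
  case (Suc t)
  have step: "stl (Suc t) (Suc (Suc t)) < stl t (Suc t)"
    using strict_step[of t] Suc.prems by simp
  show ?case
  proof (cases "t' = t")
    case True then show ?thesis using step by simp
  next
    case False
    then have "stl t (Suc t) < stl t' (Suc t')" using Suc.IH[of t'] Suc.prems by simp
    then show ?thesis using step by simp
  qed
qed

end


context injm
begin

lemma char_eq: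
  "charM c (i, m) = enat d # map enat (map (\<lambda>k. stl (e-k) (Suc (e-k))) [2..<m+1])"
proof -
  have "1 < m+1" using m2 by simp
  from upt_conv_Cons[OF this] have up: "[1..<m+1] = 1 # [2..<m+1]" by (simp only: Suc_1)
  have hd: "(let p = pd c (i + m - 1, 1) in if odd_e p then p else pd c (i, m)) = enat d"
  proof -
    have i1: "i \<le> e - 1" "e - 1 < e" using ie by auto
    have "pd c (e - 1, 1) = enat (stl (e-1) (Suc (e-1)))" using Z_facts(4)[OF i1] .
    moreover have "Suc (e-1) = e" using ie by simp
    ultimately have "pd c (e - 1, 1) = enat (stl (e-1) e)" by simp
    then have "\<not> odd_e (pd c (e - 1, 1))" using socle_even by (simp add: odd_e_def)
    then show ?thesis using pdI_d by (simp add: Let_def)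
  qed
  have tl: "map (\<lambda>k. let p = pd c (i + m - k, 1) in if odd_e p then p else pd c (i, m)) [2..<m+1]
      = map enat (map (\<lambda>k. stl (e-k) (Suc (e-k))) [2..<m+1])"
  proof (simp only: map_map, rule map_cong[OF refl])
    fix k assume "k \<in> set [2..<m+1]"
    then have k: "2 \<le> k" "k \<le> m" by auto
    have t: "i \<le> e - k" "e - k + 2 \<le> e" "e - k < e" using k by auto
    have "pd c (e - k, 1) = enat (stl (e-k) (Suc (e-k)))" using Z_facts(4)[OF t(1,3)] .
    moreover have "odd (stl (e-k) (Suc (e-k)))" using simple_odd(1)[OF t(1,2)] .
    ultimately show "(let p = pd c (i + m - k, 1) in if odd_e p then p else pd c (i, m))
        = (enat \<circ> (\<lambda>k. stl (e-k) (Suc (e-k)))) k"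
      by (simp add: Let_def odd_e_def)
  qed
  show ?thesis unfolding charM_def using up hd tl by simp
qed

lemma final_cs:
  "\<exists>cs. charM c (i, m) = enat d # map enat cs \<and> length cs = m - 1 \<and>
        sorted_wrt (<) (cs @ [d]) \<and> (\<forall>x \<in> set cs. odd x)"
proof -
  define cs where "cs = map (\<lambda>k. stl (e-k) (Suc (e-k))) [2..<m+1]"
  have len: "length cs = m - 1" by (simp only: cs_def length_map length_upt)
  have odd: "\<forall>x \<in> set cs. odd x \<and> x < d"
  proof
    fix x assume "x \<in> set cs"
    then obtain k where k: "k \<in> set [2..<m+1]" "x = stl (e-k) (Suc (e-k))" using cs_def by auto
    then have t: "i \<le> e - k" "e - k + 2 \<le> e" by auto
    show "odd x \<and> x < d" using simple_odd[OF t] k by simp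
  qed
  have sorted: "sorted_wrt (<) cs"
    unfolding cs_def sorted_wrt_map
  proof (rule sorted_wrt_mono_rel[OF _ sorted_wrt_upt])
    fix x y assume xy: "x \<in> set [2..<m+1]" "y \<in> set [2..<m+1]" "x < y"
    then have "i \<le> e - y" "e - y < e - x" "e - x + 2 \<le> e" by auto
    then show "stl (e-x) (Suc (e-x)) < stl (e-y) (Suc (e-y))" by (rule strict_all)
  qed
  have "sorted_wrt (<) (cs @ [d])" using sorted odd by (simp add: sorted_wrt_append)
  then show ?thesis using char_eq len odd cs_def by blast
qed

lemma final:
  "pd c (i, m) = enat d \<and> plus_strictly_increasing c (i, m) \<and>
   (\<exists>cs. charM c (i, m) = enat d # map enat cs \<and> length cs = m - 1 \<and>
         sorted_wrt (<) (cs @ [d]) \<and> (\<forall>x \<in> set cs. odd x))"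
  using pdI_d final_cs ind ev unfolding plus_strictly_increasing_def by blast

end

lemma domdim_ge_mono: "domdim_ge c M k \<Longrightarrow> k' \<le> k \<Longrightarrow> domdim_ge c M k'"
  unfolding domdim_ge_def by auto

lemma domdim_ge_of_mod:
  assumes "enat d \<le> domdim_mod c M"
  shows "domdim_ge c M d"
proof (rule ccontr)
  assume nd: "\<not> domdim_ge c M d"
  have d0: "d \<noteq> 0" using nd by (auto simp: domdim_ge_def)
  have "\<forall>x \<in> {enat k | k. domdim_ge c M k}. x \<le> enat (d - 1)"
  proof
    fix x assume "x \<in> {enat k | k. domdim_ge c M k}"
    then obtain k where k: "x = enat k" "domdim_ge c M k" by auto
    have "k < d" using k(2) nd domdim_ge_mono by (metis not_less)
    then show "x \<le> enat (d - 1)" using k by simp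
  qed
  then have "domdim_mod c M \<le> enat (d - 1)" unfolding domdim_mod_def by (intro Sup_least) blast
  then show False using assms d0 by (metis enat_ord_simps(1) order.trans diff_less
        less_numeral_extra(1) not_gr_zero leD)
qed

theorem proposition8p3:
  fixes c :: "nat list" and d i m :: nat
  assumes "kupisch c" and "concave c" and "even d"
    and "higher_auslander c d"
    and "indec c (i, m)" and "is_inj c (i, m)" and "\<not> is_proj c (i, m)"
    and "2 \<le> m"
  shows "pd c (i, m) = enat d \<and> plus_strictly_increasing c (i, m) \<and>
         (\<exists>cs. charM c (i, m) = enat d # map enat cs \<and> length cs = m - 1 \<and>
               sorted_wrt (<) (cs @ [d]) \<and> (\<forall>x \<in> set cs. odd x))"
proof -
  have ha: "gldim c = enat d" "domdim c = enat d" using assms(4) by (auto simp: higher_auslander_def)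
  have dd: "domdim_ge c (j, c ! j) d" if "j < length c" for j
  proof (rule domdim_ge_of_mod)
    have "domdim c \<le> domdim_mod c (j, c ! j)" unfolding domdim_def
      by (rule INF_lower) (use that in simp)
    then show "enat d \<le> domdim_mod c (j, c ! j)" using ha by simp
  qed
  have gl: "pd c M \<le> enat d" if "indec c M" for M
  proof -
    have "pd c M \<le> gldim c" unfolding gldim_def by (rule Sup_upper) (use that in simp)
    then show ?thesis using ha by simp
  qed
  interpret injm c d i m
    by unfold_locales (use assms dd gl in auto)
  show ?thesis by (rule final)
qed

end
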